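(* Let $P,P'\in\mathcal D$ and $e,e'\in\mathcal E$. If $P\sqsubseteq P'$ then $\mathrm{da}(P,e)\le\mathrm{da}(P',e)$, and if $e\sqsubseteq e'$ then $\mathrm{da}(P,e)\le\mathrm{da}(P,e')$.
   Context: Let $\mathcal V$ be a countably infinite set of variables. $\mathcal M$ is the set of maps $m:\mathcal V\to\mathbb N\cup\{\infty\}$, ordered pointwise. $\mathcal P$ is the set of discrete probability distributions on $\mathcal M$. For a subdistribution $\pi$ on $\mathcal M$ with total mass $|\pi|$, its weighting is $\overline\pi(x)=\frac1{|\pi|}\sum_m\pi(m)m(x)$ if $|\pi|>0$, and $\overline\pi(x)=0$ otherwise. For $p_1,p_2\in\mathcal P$: $p_1\sqsubseteq p_2$ iff there is a coupling $\omega$ of $p_1,p_2$ with $\overline{\omega(\cdot,m)}\le m$ pointwise for all $m\in\mathcal M$, where $\omega(\cdot,m)$ is the subdistribution $m'\mapsto\omega(m',m)$. For $P\subseteq\mathcal P$, $\downarrow P=\{p\mid p\sqsubseteq p'\text{ for some }p'\in P\}$. $\mathcal D=\{P\subseteq\mathcal P\mid P\ne\emptyset,\ \downarrow P=P\}$, ordered by $P_1\sqsubseteq P_2$ iff every $p_1\in P_1$ has some $p_2\in P_2$ with $p_1\sqsubseteq p_2$. $\mathcal E$ is the set of maps $e:\mathcal V\to[0,1)$, ordered pointwise. $\mathrm{dda}(m,e)=1-\prod_{x\in\mathcal V}(1-e(x))^{m(x)}$ (with $c^\infty=0$ for $0\le c<1$ and $1^\infty=1$), $\mathrm{pda}(p,e)=\sum_{m\in\mathcal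 M}p(m)\,\mathrm{dda}(m,e)$, and $\mathrm{da}(P,e)=\sup_{p\in P}\mathrm{pda}(p,e)$. *)

theory Defs
  imports "HOL-Probability.Probability"
begin

type_synonym 'v mstate = "'v \<Rightarrow> enat"

definition submass :: "('v mstate \<times> 'v mstate) pmf \<Rightarrow> 'v mstate \<Rightarrow> ennreal" where
  "submass \<omega> m = (\<Sum>\<^sub>\<infinity>m'. ennreal (pmf \<omega> (m', m)))"

definition weighting :: "('v mstate \<times> 'v mstate) pmf \<Rightarrow> 'v mstate \<Rightarrow> 'v \<Rightarrow> ennreal" where
  "weighting \<omega> m x =
     (if submass \<omega> m > 0
      then (\<Sum>\<^sub>\<infinity>m'. ennreal (pmf \<omega> (m', m)) * ennreal_of_enat (m' x)) / submass \<omega> m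
      else 0)"

definition is_coupling :: "('v mstate \<times> 'v mstate) pmf \<Rightarrow> 'v mstate pmf \<Rightarrow> 'v mstate pmf \<Rightarrow> bool" where
  "is_coupling \<omega> p1 p2 \<longleftrightarrow> map_pmf fst \<omega> = p1 \<and> map_pmf snd \<omega> = p2"

definition pmf_le :: "'v mstate pmf \<Rightarrow> 'v mstate pmf \<Rightarrow> bool" where
  "pmf_le p1 p2 \<longleftrightarrow> (\<exists>\<omega>. is_coupling \<omega> p1 p2 \<and>
      (\<forall>m x. weighting \<omega> m x \<le> ennreal_of_enat (m x)))"

definition down_closure :: "'v mstate pmf set \<Rightarrow> 'v mstate pmf set" where
  "down_closure P = {p. \<exists>p'\<in>P. pmf_le p p'}"

definition Dom :: "'v mstate pmf set set" where
  "Dom = {P. P \<noteq> {} \<and> down_closure P = P}"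

definition D_le :: "'v mstate pmf set \<Rightarrow> 'v mstate pmf set \<Rightarrow> bool" where
  "D_le P1 P2 \<longleftrightarrow> (\<forall>p1\<in>P1. \<exists>p2\<in>P2. pmf_le p1 p2)"

definition Err :: "('v \<Rightarrow> real) set" where
  "Err = {e. \<forall>x. 0 \<le> e x \<and> e x < 1}"

definition epow :: "real \<Rightarrow> enat \<Rightarrow> real" where
  "epow c k = (case k of enat n \<Rightarrow> c ^ n | \<infinity> \<Rightarrow> (if c = 1 then 1 else 0))"

text \<open>Product over all (countably many) variables of factors in [0,1]: the
  infimum of the finite partial products (= limit of partial products).\<close>
definition dda :: "'v mstate \<Rightarrow> ('v \<Rightarrow> real) \<Rightarrow> real" where
  "dda m e = 1 - (INF F\<in>{F. finite F}. \<Prod>x\<in>F. epow (1 - e x) (m x))"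

definition pda :: "'v mstate pmf \<Rightarrow> ('v \<Rightarrow> real) \<Rightarrow> real" where
  "pda p e = (\<Sum>\<^sub>\<infinity>m. pmf p m * dda m e)"

definition da :: "'v mstate pmf set \<Rightarrow> ('v \<Rightarrow> real) \<Rightarrow> real" where
  "da P e = (SUP p\<in>P. pda p e)"

end

theory Submission
  imports Defs
begin


lemma epow_bounds:
  assumes "0 \<le> c" "c \<le> 1"
  shows "0 \<le> epow c k" "epow c k \<le> 1"
  using assms by (cases k; auto simp: epow_def power_le_one)+

lemma epow_mono_base:
  assumes "0 \<le> c" "c \<le> d" "d \<le> 1"
  shows "epow c k \<le> epow d k"
  using assms by (cases k) (auto simp: epow_def power_mono)

definition piF :: "'v set \<Rightarrow> 'v mstate \<Rightarrow> ('v \<Rightarrow> real) \<Rightarrow> real" where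
  "piF F m e = (\<Prod>x\<in>F. epow (1 - e x) (m x))"

lemma piF_bounds:
  assumes "e \<in> Err"
  shows "0 \<le> piF F m e" "piF F m e \<le> 1"
proof -
  have b: "0 \<le> 1 - e x" "1 - e x \<le> 1" for x using assms by (auto simp: Err_def less_imp_le)
  show "0 \<le> piF F m e" unfolding piF_def by (intro prod_nonneg) (use epow_bounds[OF b] in auto)
  show "piF F m e \<le> 1" unfolding piF_def by (intro prod_le_1) (use epow_bounds[OF b] in auto)
qed

lemma piF_anti:
  assumes "e \<in> Err" "finite G" "F \<subseteq> G"
  shows "piF G m e \<le> piF F m e"
proof -
  have b: "0 \<le> 1 - e x" "1 - e x \<le> 1" for x using assms by (auto simp: Err_def less_imp_le)
  have "piF G m e = (\<Prod>x\<in>G-F. epow (1 - e x) (m x)) * piF F m e"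
    unfolding piF_def using assms by (metis prod.subset_diff)
  also have "\<dots> \<le> 1 * piF F m e"
    by (intro mult_right_mono prod_le_1 piF_bounds[OF assms(1)]) (use epow_bounds[OF b] in auto)
  finally show ?thesis by simp
qed

lemma dda_alt: "dda m e = 1 - (INF F\<in>{F. finite F}. piF F m e)"
  by (simp add: dda_def piF_def)

lemma INF_piF_bounds:
  assumes "e \<in> Err"
  shows "0 \<le> (INF F\<in>{F. finite F}. piF F m e)" "(INF F\<in>{F. finite F}. piF F m e) \<le> 1"
proof -
  show "0 \<le> (INF F\<in>{F. finite F}. piF F m e)"
    by (rule cINF_greatest) (auto intro: piF_bounds[OF assms])
  have "(INF F\<in>{F. finite F}. piF F m e) \<le> piF {} m e"
    by (rule cINF_lower) (auto intro!: bdd_belowI2[where m=0] piF_bounds[OF assms])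
  then show "(INF F\<in>{F. finite F}. piF F m e) \<le> 1" by (simp add: piF_def)
qed

lemma dda_bounds:
  assumes "e \<in> Err"
  shows "0 \<le> dda m e" "dda m e \<le> 1"
  using INF_piF_bounds[OF assms, of m] by (auto simp: dda_alt)

lemma dda_mono_e:
  fixes m :: "'v mstate"
  assumes "e \<in> Err" "e' \<in> Err" "e \<le> e'"
  shows "dda m e \<le> dda m e'"
proof -
  have le: "piF F m e' \<le> piF F m e" for F
  proof -
    have "epow (1 - e' x) (m x) \<le> epow (1 - e x) (m x)" for x
      using assms by (intro epow_mono_base) (auto simp: Err_def le_fun_def less_imp_le)
    moreover have "0 \<le> epow (1 - e' x) (m x)" for x
      using assms by (intro epow_bounds) (auto simp: Err_def less_imp_le)
    ultimately show ?thesis unfolding piF_def by (intro prod_mono) auto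
  qed
  have "(INF F\<in>{F. finite F}. piF F m e') \<le> (INF F\<in>{F. finite F}. piF F m e)"
  proof (rule cINF_greatest)
    fix F :: "'v set" assume "F \<in> {F. finite F}"
    have "(INF F\<in>{F. finite F}. piF F m e') \<le> piF F m e'"
      by (rule cINF_lower) (use \<open>F \<in> _\<close> in \<open>auto intro!: bdd_belowI2[where m=0] piF_bounds[OF assms(2)]\<close>)
    then show "(INF F\<in>{F. finite F}. piF F m e') \<le> piF F m e" using le[of F] by linarith
  qed auto
  then show ?thesis by (simp add: dda_alt)
qed



lemma pda_expectation:
  assumes "e \<in> Err"
  shows "pda p e = measure_pmf.expectation p (\<lambda>m. dda m e)"
proof -
  have "Infinite_Set_Sum.abs_summable_on (\<lambda>m. pmf p m * dda m e) UNIV"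
    unfolding abs_summable_on_def
    by (rule Bochner_Integration.integrable_bound[OF integrable_pmf[of UNIV p]])
       (use dda_bounds[OF assms] in \<open>auto intro!: mult_left_le\<close>)
  then show ?thesis
    unfolding pda_def pmf_expectation_eq_infsetsum by (simp add: infsetsum_infsum)
qed

lemma pda_bounds:
  assumes "e \<in> Err"
  shows "0 \<le> pda p e" "pda p e \<le> 1"
proof -
  have int: "integrable (measure_pmf p) (\<lambda>m. dda m e)"
    by (rule measure_pmf.integrable_const_bound[where B=1]) (use dda_bounds[OF assms] in \<open>auto intro!: AE_I2 simp: abs_le_iff\<close>)
  show "0 \<le> pda p e" unfolding pda_expectation[OF assms]
    by (rule Bochner_Integration.integral_nonneg) (use dda_bounds[OF assms] in \<open>auto intro!: AE_I2 simp: abs_le_iff\<close>)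
  have "measure_pmf.expectation p (\<lambda>m. dda m e) \<le> measure_pmf.expectation p (\<lambda>m. 1)"
    by (rule Bochner_Integration.integral_mono[OF int]) (use dda_bounds[OF assms] in \<open>auto intro!: AE_I2 simp: abs_le_iff\<close>)
  then show "pda p e \<le> 1" by (simp add: pda_expectation[OF assms])
qed

lemma pda_mono_e:
  assumes "e \<in> Err" "e' \<in> Err" "e \<le> e'"
  shows "pda p e \<le> pda p e'"
proof -
  show ?thesis
    unfolding pda_expectation[OF assms(1)] pda_expectation[OF assms(2)]
    apply (rule Bochner_Integration.integral_mono)
      apply (rule measure_pmf.integrable_const_bound[where B=1]; use dda_bounds[OF assms(1)] in \<open>auto intro!: AE_I2 simp: abs_le_iff\<close>)
     apply (rule measure_pmf.integrable_const_bound[where B=1]; use dda_bounds[OF assms(2)] in \<open>auto intro!: AE_I2 simp: abs_le_iff\<close>)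
    by (rule dda_mono_e[OF assms])
qed

lemma pda_nn:
  assumes "e \<in> Err"
  shows "ennreal (pda p e) = (\<integral>\<^sup>+m. ennreal (dda m e) \<partial>measure_pmf p)"
proof -
  have int: "integrable (measure_pmf p) (\<lambda>m. dda m e)"
    by (rule measure_pmf.integrable_const_bound[where B=1]) (use dda_bounds[OF assms] in \<open>auto intro!: AE_I2 simp: abs_le_iff\<close>)
  show ?thesis unfolding pda_expectation[OF assms]
    by (rule nn_integral_eq_integral[OF int, symmetric]) (use dda_bounds[OF assms] in \<open>auto intro!: AE_I2 simp: abs_le_iff\<close>)
qed

lemma pda_mono_nn:
  assumes "e \<in> Err"
    and "(\<integral>\<^sup>+m. ennreal (dda m e) \<partial>measure_pmf p) \<le> (\<integral>\<^sup>+m. ennreal (dda m e) \<partial>measure_pmf q)"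
  shows "pda p e \<le> pda q e"
  using assms(2) unfolding pda_nn[OF assms(1), symmetric]
  by (simp add: ennreal_le_iff pda_bounds[OF assms(1)])



lemma infsum_nat_ennreal: "infsum (g :: nat \<Rightarrow> ennreal) UNIV = (\<Sum>n. g n)"
proof -
  have "(g has_sum infsum g UNIV) UNIV" by (rule has_sum_infsum, rule nonneg_summable_on_complete) simp
  then have "g sums infsum g UNIV" by (rule has_sum_imp_sums)
  then show ?thesis by (simp add: sums_iff)
qed

lemma infsum_nn:
  fixes f :: "'a \<Rightarrow> ennreal"
  assumes "countable {x. f x \<noteq> 0}"
  shows "infsum f UNIV = (\<integral>\<^sup>+x. f x \<partial>count_space UNIV)"
proof -
  define S where "S = {x. f x \<noteq> 0}"
  have 1: "infsum f UNIV = infsum f S"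
    by (rule infsum_cong_neutral) (auto simp: S_def)
  have 2: "(\<integral>\<^sup>+x. f x \<partial>count_space UNIV) = (\<integral>\<^sup>+x. f x \<partial>count_space S)"
    by (subst nn_integral_count_space_indicator) (auto intro!: nn_integral_cong simp: S_def split: split_indicator)
  show ?thesis
  proof (cases "finite S")
    case True
    then show ?thesis unfolding 1 2 by (simp add: nn_integral_count_space_finite)
  next
    case False
    have cS: "countable S" using assms by (simp add: S_def)
    note bij = bij_betw_from_nat_into[OF cS False]
    have "infsum f S = infsum (\<lambda>n. f (from_nat_into S n)) UNIV"
      by (rule infsum_reindex_bij_betw[OF bij, symmetric])
    also have "\<dots> = (\<Sum>n. f (from_nat_into S n))" by (rule infsum_nat_ennreal)
    also have "\<dots> = (\<integral>\<^sup>+n. f (from_nat_into S n) \<partial>count_space UNIV)"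
      by (rule nn_integral_count_space_nat[symmetric])
    also have "\<dots> = (\<integral>\<^sup>+x. f x \<partial>count_space S)"
      by (rule nn_integral_bij_count_space[OF bij])
    finally show ?thesis unfolding 1 2 .
  qed
qed

lemma fiber_bridge:
  fixes \<omega> :: "('a \<times> 'b) pmf" and h :: "'a \<Rightarrow> ennreal"
  shows "(\<Sum>\<^sub>\<infinity>m'. ennreal (pmf \<omega> (m', m)) * h m') = (\<integral>\<^sup>+z. h (fst z) * indicator {m} (snd z) \<partial>measure_pmf \<omega>)"
proof -
  have cnt: "countable {m'. ennreal (pmf \<omega> (m', m)) * h m' \<noteq> 0}"
  proof (rule countable_subset)
    show "{m'. ennreal (pmf \<omega> (m', m)) * h m' \<noteq> 0} \<subseteq> fst ` set_pmf \<omega>"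
      by (force simp: set_pmf_eq)
  qed auto
  have "(\<Sum>\<^sub>\<infinity>m'. ennreal (pmf \<omega> (m', m)) * h m') = (\<integral>\<^sup>+m'. ennreal (pmf \<omega> (m', m)) * h m' \<partial>count_space UNIV)"
    by (rule infsum_nn[OF cnt])
  also have "\<dots> = (\<integral>\<^sup>+z. ennreal (pmf \<omega> z) * h (fst z) \<partial>count_space {z. snd z = m})"
  proof -
    have bij: "bij_betw (\<lambda>m'. (m', m)) UNIV {z. snd z = m}"
      by (rule bij_betw_byWitness[where f'=fst]) auto
    show ?thesis
      using nn_integral_bij_count_space[OF bij, of "\<lambda>z. ennreal (pmf \<omega> z) * h (fst z)"] by simp
  qed
  also have "\<dots> = (\<integral>\<^sup>+z. ennreal (pmf \<omega> z) * (h (fst z) * indicator {m} (snd z)) \<partial>count_space UNIV)"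
    by (subst nn_integral_count_space_indicator) (auto intro!: nn_integral_cong split: split_indicator)
  also have "\<dots> = (\<integral>\<^sup>+z. h (fst z) * indicator {m} (snd z) \<partial>measure_pmf \<omega>)"
    by (rule nn_integral_measure_pmf[symmetric])
  finally show ?thesis .
qed

lemma fiber_mass:
  fixes \<omega> :: "('a \<times> 'b) pmf"
  shows "(\<integral>\<^sup>+z. indicator {m} (snd z) \<partial>measure_pmf \<omega>) = ennreal (pmf (map_pmf snd \<omega>) m)"
proof -
  have "(\<integral>\<^sup>+z. indicator {m} (snd z) \<partial>measure_pmf \<omega>) = (\<integral>\<^sup>+z. indicator (snd -` {m}) z \<partial>measure_pmf \<omega>)"
    by (rule nn_integral_cong) (simp split: split_indicator)
  also have "\<dots> = emeasure (measure_pmf \<omega>) (snd -` {m})" by (rule nn_integral_indicator) simp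
  also have "\<dots> = emeasure (measure_pmf (map_pmf snd \<omega>)) {m}" by simp
  also have "\<dots> = ennreal (pmf (map_pmf snd \<omega>) m)" by (simp add: emeasure_pmf_single)
  finally show ?thesis .
qed

lemma submass_eq: "submass \<omega> m = ennreal (pmf (map_pmf snd \<omega>) m)"
  unfolding submass_def using fiber_bridge[of \<omega> m "\<lambda>_. 1"] fiber_mass[where m=m and \<omega>=\<omega>] by simp

lemma weighting_bound:
  assumes "\<And>x. weighting \<omega> m x \<le> ennreal_of_enat (m x)"
  shows "(\<integral>\<^sup>+z. ennreal_of_enat (fst z x) * indicator {m} (snd z) \<partial>measure_pmf \<omega>)
           \<le> ennreal (pmf (map_pmf snd \<omega>) m) * ennreal_of_enat (m x)"
proof (cases "pmf (map_pmf snd \<omega>) m = 0")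
  case True
  have "AE z in measure_pmf \<omega>. indicator {m} (snd z) = (0::ennreal)"
    using True by (auto simp: AE_measure_pmf_iff pmf_eq_0_set_pmf split: split_indicator)
  then have "(\<integral>\<^sup>+z. ennreal_of_enat (fst z x) * indicator {m} (snd z) \<partial>measure_pmf \<omega>) = 0"
    by (intro nn_integral_0_iff_AE[THEN iffD2]) (auto elim!: eventually_mono)
  then show ?thesis by simp
next
  case False
  define s where "s = ennreal (pmf (map_pmf snd \<omega>) m)"
  define I where "I = (\<integral>\<^sup>+z. ennreal_of_enat (fst z x) * indicator {m} (snd z) \<partial>measure_pmf \<omega>)"
  have s0: "s > 0" using False pmf_nonneg[of "map_pmf snd \<omega>" m] by (simp add: s_def)
  have sinf: "s \<noteq> \<infinity>" by (simp add: s_def)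
  have "weighting \<omega> m x = I / s"
    unfolding weighting_def submass_eq[symmetric] s_def[symmetric] I_def
    using s0 by (simp add: submass_eq s_def fiber_bridge[where \<omega>=\<omega> and m=m and h="\<lambda>m'. ennreal_of_enat (m' x)"])
  then have "I / s \<le> ennreal_of_enat (m x)" using assms[of x] by metis
  then have "I / s * s \<le> ennreal_of_enat (m x) * s" by (rule mult_right_mono) simp
  moreover have "I / s * s = I" using s0 sinf by (simp add: ennreal_divide_times ennreal_divide_self top.not_eq_extremum)
  ultimately show ?thesis by (simp add: I_def s_def mult.commute)
qed



definition psi :: "ennreal \<Rightarrow> real" where
  "psi t = (if t = \<top> then 0 else exp (- enn2real t))"

lemma psi_bounds: "0 \<le> psi t" "psi t \<le> 1"
  by (auto simp: psi_def)

lemma psi_add: "psi (a + b) = psi a * psi b"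
proof (cases "a = \<top> \<or> b = \<top>")
  case True then show ?thesis by (auto simp: psi_def)
next
  case False
  then have "a < \<top>" "b < \<top>" by (auto simp: top.not_eq_extremum)
  then show ?thesis using False by (auto simp: psi_def enn2real_plus exp_add[symmetric] ennreal_add_eq_top)
qed

definition cst :: "('v \<Rightarrow> real) \<Rightarrow> 'v \<Rightarrow> real" where
  "cst e x = - ln (1 - e x)"

lemma cst_nonneg: "e \<in> Err \<Longrightarrow> 0 \<le> cst e x"
  by (auto simp: cst_def Err_def)

lemma epow_psi:
  assumes "e \<in> Err"
  shows "epow (1 - e x) k = psi (ennreal (cst e x) * ennreal_of_enat k)"
proof -
  have e: "0 \<le> e x" "e x < 1" using assms by (auto simp: Err_def)
  have ex: "exp (- cst e x) = 1 - e x" using e by (simp add: cst_def)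
  show ?thesis
  proof (cases k)
    case (enat n)
    have "psi (ennreal (cst e x) * ennreal_of_enat k) = psi (ennreal (cst e x * real n))"
      using cst_nonneg[OF assms] by (simp add: enat ennreal_mult' ennreal_of_nat_eq_real_of_nat)
    also have "\<dots> = exp (- (cst e x * real n))"
      using cst_nonneg[OF assms] by (simp add: psi_def)
    also have "\<dots> = exp (- cst e x) ^ n"
      by (simp add: exp_of_nat_mult[symmetric] mult.commute)
    finally show ?thesis using ex by (simp add: enat epow_def)
  next
    case infinity
    show ?thesis
    proof (cases "e x = 0")
      case True
      then show ?thesis by (simp add: infinity epow_def cst_def psi_def)
    next
      case False
      then have "cst e x \<noteq> 0" using e by (auto simp: cst_def)
      then have "ennreal (cst e x) \<noteq> 0" using cst_nonneg[OF assms, of x] by simp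
      then show ?thesis using False by (simp add: infinity epow_def psi_def ennreal_mult_top)
    qed
  qed
qed

definition LF :: "'v set \<Rightarrow> ('v \<Rightarrow> real) \<Rightarrow> 'v mstate \<Rightarrow> ennreal" where
  "LF F e m = (\<Sum>x\<in>F. ennreal (cst e x) * ennreal_of_enat (m x))"

lemma piF_psi:
  assumes "e \<in> Err" "finite F"
  shows "piF F m e = psi (LF F e m)"
  using assms(2)
proof (induction F rule: finite_induct)
  case empty then show ?case by (simp add: piF_def LF_def psi_def)
next
  case (insert x F)
  then show ?case
    by (simp add: piF_def LF_def psi_add epow_psi[OF assms(1)])
qed

lemma tangent:
  assumes "a \<noteq> \<top>"
  shows "ennreal (1 - psi t) + ennreal (exp (- enn2real a) * enn2real a)
           \<le> ennreal (1 - psi a) + ennreal (exp (- enn2real a)) * t"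
proof (cases "t = \<top>")
  case True
  then show ?thesis by (simp add: ennreal_mult_top)
next
  case False
  define A where "A = enn2real a"
  define T where "T = enn2real t"
  have a: "a = ennreal A" "0 \<le> A" using assms unfolding A_def
    by (simp_all add: ennreal_enn2real_if)
  have t: "t = ennreal T" "0 \<le> T" using False unfolding T_def
    by (simp_all add: ennreal_enn2real_if)
  have pt: "psi t = exp (- T)" using False by (simp add: psi_def T_def)
  have pa: "psi a = exp (- A)" using assms by (simp add: psi_def A_def)
  have "1 + (A - T) \<le> exp (A - T)" by (rule exp_ge_add_one_self)
  then have "exp (- A) * (1 + (A - T)) \<le> exp (- A) * exp (A - T)" by simp
  also have "\<dots> = exp (- T)" by (simp add: exp_add[symmetric])
  finally have ineq: "1 - exp (- T) + exp (- A) * A \<le> 1 - exp (- A) + exp (- A) * T"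
    by (simp add: algebra_simps)
  have "ennreal (1 - psi t) + ennreal (exp (- A) * A) = ennreal (1 - exp (- T) + exp (- A) * A)"
    unfolding pt by (rule ennreal_plus[symmetric]) (use t a in auto)
  also have "\<dots> \<le> ennreal (1 - exp (- A) + exp (- A) * T)"
    using ineq by (rule ennreal_leI)
  also have "\<dots> = ennreal (1 - psi a) + ennreal (exp (- A)) * t"
    unfolding pa by (subst t(1), subst ennreal_plus) (use t a in \<open>auto simp: ennreal_mult\<close>)
  finally show ?thesis by (simp add: A_def)
qed



lemma core:
  fixes \<omega> :: "'a pmf" and w t :: "'a \<Rightarrow> ennreal"
  assumes ws: "(\<integral>\<^sup>+z. w z \<partial>\<omega>) = s" and sfin: "s \<noteq> \<top>"
    and tw: "(\<integral>\<^sup>+z. t z * w z \<partial>\<omega>) \<le> s * a"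
  shows "(\<integral>\<^sup>+z. ennreal (1 - psi (t z)) * w z \<partial>\<omega>) \<le> s * ennreal (1 - psi a)"
proof (cases "a = \<top>")
  case True
  have "(\<integral>\<^sup>+z. ennreal (1 - psi (t z)) * w z \<partial>\<omega>) \<le> (\<integral>\<^sup>+z. w z \<partial>\<omega>)"
  proof (rule nn_integral_mono)
    fix z
    have "ennreal (1 - psi (t z)) \<le> 1" using psi_bounds[of "t z"] by simp
    then have "ennreal (1 - psi (t z)) * w z \<le> 1 * w z" by (rule mult_right_mono) simp
    then show "ennreal (1 - psi (t z)) * w z \<le> w z" by simp
  qed
  then show ?thesis using True ws by (simp add: psi_def)
next
  case False
  define A where "A = enn2real a"
  define K where "K = exp (- A)"
  have aA: "a = ennreal A" "0 \<le> A" using False unfolding A_def by (simp_all add: ennreal_enn2real_if)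
  have pw: "ennreal (1 - psi (t z)) * w z + ennreal (K * A) * w z
      \<le> ennreal (1 - psi a) * w z + ennreal K * (t z * w z)" for z
  proof -
    have "(ennreal (1 - psi (t z)) + ennreal (K * A)) * w z \<le> (ennreal (1 - psi a) + ennreal K * t z) * w z"
      by (rule mult_right_mono) (use tangent[OF False, of "t z"] in \<open>simp_all add: K_def A_def\<close>)
    then show ?thesis by (simp add: distrib_right mult.assoc)
  qed
  have "(\<integral>\<^sup>+z. ennreal (1 - psi (t z)) * w z \<partial>\<omega>) + ennreal (K * A) * s
      = (\<integral>\<^sup>+z. ennreal (1 - psi (t z)) * w z + ennreal (K * A) * w z \<partial>\<omega>)"
    by (simp add: nn_integral_add nn_integral_cmult ws)
  also have "\<dots> \<le> (\<integral>\<^sup>+z. ennreal (1 - psi a) * w z + ennreal K * (t z * w z) \<partial>\<omega>)"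
    by (rule nn_integral_mono) (rule pw)
  also have "\<dots> = ennreal (1 - psi a) * s + ennreal K * (\<integral>\<^sup>+z. t z * w z \<partial>\<omega>)"
    by (simp add: nn_integral_add nn_integral_cmult ws)
  also have "\<dots> \<le> ennreal (1 - psi a) * s + ennreal K * (s * a)"
    by (intro add_left_mono mult_left_mono tw) simp
  also have "ennreal K * (s * a) = ennreal (K * A) * s"
    using aA by (simp add: ennreal_mult K_def mult_ac)
  finally have "ennreal (K * A) * s + (\<integral>\<^sup>+z. ennreal (1 - psi (t z)) * w z \<partial>\<omega>)
      \<le> ennreal (K * A) * s + ennreal (1 - psi a) * s"
    by (simp add: add.commute)
  moreover have "ennreal (K * A) * s \<noteq> \<top>" using sfin by (simp add: ennreal_mult_eq_top_iff)
  ultimately show ?thesis by (simp add: ennreal_add_left_cancel_le mult.commute)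
qed



lemma stepF:
  fixes \<omega> :: "('v mstate \<times> 'v mstate) pmf"
  assumes e: "e \<in> Err" and fin: "finite F"
    and hyp: "\<And>x. (\<integral>\<^sup>+z. ennreal_of_enat (fst z x) * indicator {m} (snd z) \<partial>\<omega>)
                 \<le> ennreal (pmf (map_pmf snd \<omega>) m) * ennreal_of_enat (m x)"
  shows "(\<integral>\<^sup>+z. ennreal (1 - psi (LF F e (fst z))) * indicator {m} (snd z) \<partial>\<omega>)
           \<le> ennreal (pmf (map_pmf snd \<omega>) m) * ennreal (1 - psi (LF F e m))"
proof (rule core)
  show "(\<integral>\<^sup>+z. indicator {m} (snd z) \<partial>\<omega>) = ennreal (pmf (map_pmf snd \<omega>) m)"
    by (rule fiber_mass)
  show "ennreal (pmf (map_pmf snd \<omega>) m) \<noteq> \<top>" by simp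
  have "(\<integral>\<^sup>+z. LF F e (fst z) * indicator {m} (snd z) \<partial>\<omega>)
      = (\<integral>\<^sup>+z. (\<Sum>x\<in>F. ennreal (cst e x) * (ennreal_of_enat (fst z x) * indicator {m} (snd z))) \<partial>\<omega>)"
    by (simp add: LF_def sum_distrib_right mult.assoc)
  also have "\<dots> = (\<Sum>x\<in>F. ennreal (cst e x) * (\<integral>\<^sup>+z. ennreal_of_enat (fst z x) * indicator {m} (snd z) \<partial>\<omega>))"
    by (simp add: nn_integral_sum nn_integral_cmult)
  also have "\<dots> \<le> (\<Sum>x\<in>F. ennreal (cst e x) * (ennreal (pmf (map_pmf snd \<omega>) m) * ennreal_of_enat (m x)))"
    by (intro sum_mono mult_left_mono hyp) simp
  also have "\<dots> = ennreal (pmf (map_pmf snd \<omega>) m) * LF F e m"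
    by (simp add: LF_def sum_distrib_left mult_ac)
  finally show "(\<integral>\<^sup>+z. LF F e (fst z) * indicator {m} (snd z) \<partial>\<omega>) \<le> ennreal (pmf (map_pmf snd \<omega>) m) * LF F e m" .
qed

definition Fn :: "nat \<Rightarrow> 'v set" where
  "Fn n = from_nat_into (UNIV :: 'v set) ` {..<n}"

lemma Fn_finite: "finite (Fn n)" by (simp add: Fn_def)

lemma Fn_mono: "n \<le> k \<Longrightarrow> Fn n \<subseteq> Fn k"
  unfolding Fn_def by auto

lemma Fn_cover:
  assumes "countable (UNIV :: 'v set)" "finite (F :: 'v set)"
  shows "\<exists>n. F \<subseteq> Fn n"
proof (intro exI subsetI)
  fix x assume "x \<in> F"
  have "to_nat_on (UNIV :: 'v set) x \<le> Max (to_nat_on UNIV ` F)"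
    using assms(2) \<open>x \<in> F\<close> by (intro Max_ge) auto
  then have "to_nat_on (UNIV :: 'v set) x \<in> {..<Suc (Max (to_nat_on UNIV ` F))}" by simp
  moreover have "from_nat_into UNIV (to_nat_on (UNIV :: 'v set) x) = x"
    using assms(1) by simp
  ultimately show "x \<in> Fn (Suc (Max (to_nat_on UNIV ` F)))"
    unfolding Fn_def by (metis image_eqI)
qed

lemma INF_chain:
  fixes m :: "'v mstate"
  assumes e: "e \<in> Err" and cnt: "countable (UNIV :: 'v set)"
  shows "(INF F\<in>{F. finite F}. piF F m e) = (INF n. piF (Fn n) m e)"
proof (rule antisym)
  show "(INF F\<in>{F. finite F}. piF F m e) \<le> (INF n. piF (Fn n) m e)"
  proof (rule cINF_greatest)
    fix n
    show "(INF F\<in>{F. finite F}. piF F m e) \<le> piF (Fn n) m e"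
      by (rule cINF_lower) (auto intro!: bdd_belowI2[where m=0] piF_bounds[OF e] Fn_finite)
  qed simp
  show "(INF n. piF (Fn n) m e) \<le> (INF F\<in>{F. finite F}. piF F m e)"
  proof (rule cINF_greatest)
    fix F :: "'v set" assume "F \<in> {F. finite F}"
    then obtain n where n: "F \<subseteq> Fn n" using Fn_cover[OF cnt] by auto
    have "(INF n. piF (Fn n) m e) \<le> piF (Fn n) m e"
      by (rule cINF_lower) (auto intro!: bdd_belowI2[where m=0] piF_bounds[OF e])
    also have "\<dots> \<le> piF F m e" by (rule piF_anti[OF e Fn_finite n])
    finally show "(INF n. piF (Fn n) m e) \<le> piF F m e" .
  qed auto
qed

lemma dda_SUP:
  fixes m :: "'v mstate"
  assumes e: "e \<in> Err" and cnt: "countable (UNIV :: 'v set)"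
  shows "ennreal (dda m e) = (SUP n. ennreal (1 - piF (Fn n) m e))"
    and "incseq (\<lambda>n. ennreal (1 - piF (Fn n) m e))"
proof -
  define X where "X n = piF (Fn n) m e" for n
  have dec: "decseq X" unfolding X_def
    by (intro decseq_SucI piF_anti[OF e Fn_finite] Fn_mono) simp
  have "X \<longlonglongrightarrow> (INF n. X n)"
    by (rule LIMSEQ_decseq_INF[OF _ dec]) (auto intro!: bdd_belowI2[where m=0] piF_bounds[OF e] simp: X_def)
  then have "(\<lambda>n. 1 - X n) \<longlonglongrightarrow> dda m e"
    unfolding dda_alt INF_chain[OF e cnt] X_def by (intro tendsto_intros)
  then have l1: "(\<lambda>n. ennreal (1 - X n)) \<longlonglongrightarrow> ennreal (dda m e)" by (rule tendsto_ennrealI)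
  show inc: "incseq (\<lambda>n. ennreal (1 - piF (Fn n) m e))"
    using dec unfolding X_def incseq_def decseq_def by (auto intro!: ennreal_leI)
  have "(\<lambda>n. ennreal (1 - X n)) \<longlonglongrightarrow> (SUP n. ennreal (1 - X n))"
    using inc unfolding X_def by (rule LIMSEQ_SUP)
  then show "ennreal (dda m e) = (SUP n. ennreal (1 - piF (Fn n) m e))"
    using l1 LIMSEQ_unique unfolding X_def by blast
qed

lemma Kineq:
  fixes \<omega> :: "('v mstate \<times> 'v mstate) pmf"
  assumes e: "e \<in> Err" and cnt: "countable (UNIV :: 'v set)"
    and hyp: "\<And>x. (\<integral>\<^sup>+z. ennreal_of_enat (fst z x) * indicator {m} (snd z) \<partial>\<omega>)
                 \<le> ennreal (pmf (map_pmf snd \<omega>) m) * ennreal_of_enat (m x)"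
  shows "(\<integral>\<^sup>+z. ennreal (dda (fst z) e) * indicator {m} (snd z) \<partial>\<omega>)
           \<le> ennreal (pmf (map_pmf snd \<omega>) m) * ennreal (dda m e)"
proof -
  define f where "f n z = ennreal (1 - piF (Fn n) (fst z) e) * indicator {m} (snd z)" for n z
  have inc: "incseq f"
    unfolding f_def incseq_def le_fun_def
    using dda_SUP(2)[OF e cnt] by (auto intro!: mult_right_mono simp: incseq_def)
  have "(\<integral>\<^sup>+z. ennreal (dda (fst z) e) * indicator {m} (snd z) \<partial>\<omega>) = (\<integral>\<^sup>+z. (SUP n. f n z) \<partial>\<omega>)"
    unfolding f_def dda_SUP(1)[OF e cnt] by (simp add: SUP_mult_right_ennreal)
  also have "\<dots> = (SUP n. \<integral>\<^sup>+z. f n z \<partial>\<omega>)"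
    by (rule nn_integral_monotone_convergence_SUP[OF inc]) simp
  also have "\<dots> \<le> (SUP n. ennreal (pmf (map_pmf snd \<omega>) m) * ennreal (1 - piF (Fn n) m e))"
  proof (rule SUP_mono)
    fix n
    show "\<exists>k\<in>UNIV. (\<integral>\<^sup>+z. f n z \<partial>\<omega>) \<le> ennreal (pmf (map_pmf snd \<omega>) m) * ennreal (1 - piF (Fn k) m e)"
      using stepF[OF e Fn_finite hyp, of n] unfolding f_def piF_psi[OF e Fn_finite] by blast
  qed
  also have "\<dots> = ennreal (pmf (map_pmf snd \<omega>) m) * ennreal (dda m e)"
    unfolding dda_SUP(1)[OF e cnt] by (simp add: SUP_mult_left_ennreal)
  finally show ?thesis .
qed



lemma pda_mono_pmf_le:
  fixes p1 p2 :: "'v mstate pmf"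
  assumes e: "e \<in> Err" and cnt: "countable (UNIV :: 'v set)" and le: "pmf_le p1 p2"
  shows "pda p1 e \<le> pda p2 e"
proof -
  obtain \<omega> where cp: "is_coupling \<omega> p1 p2" and W: "\<And>m x. weighting \<omega> m x \<le> ennreal_of_enat (m x)"
    using le unfolding pmf_le_def by blast
  have p1: "p1 = map_pmf fst \<omega>" and p2: "p2 = map_pmf snd \<omega>" using cp by (auto simp: is_coupling_def)
  define g where "g m' = ennreal (dda m' e)" for m' :: "'v mstate"
  define S where "S = set_pmf p2"
  have cS: "countable S" by (simp add: S_def)
  have "(\<integral>\<^sup>+m. g m \<partial>p1) = (\<integral>\<^sup>+z. g (fst z) \<partial>\<omega>)" by (simp add: p1)
  also have "\<dots> = (\<integral>\<^sup>+z. (\<integral>\<^sup>+m. g (fst z) * indicator {m} (snd z) \<partial>count_space S) \<partial>\<omega>)"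
  proof (rule nn_integral_cong_AE)
    have "AE z in measure_pmf \<omega>. snd z \<in> S"
      by (auto simp: AE_measure_pmf_iff S_def p2)
    then show "AE z in measure_pmf \<omega>. g (fst z) = (\<integral>\<^sup>+m. g (fst z) * indicator {m} (snd z) \<partial>count_space S)"
    proof (rule eventually_mono)
      fix z :: "'v mstate \<times> 'v mstate" assume z: "snd z \<in> S"
      have "(\<integral>\<^sup>+m. g (fst z) * indicator {m} (snd z) \<partial>count_space S) = (\<integral>\<^sup>+m. g (fst z) * indicator {snd z} m \<partial>count_space S)"
        by (rule nn_integral_cong) (simp split: split_indicator)
      also have "\<dots> = g (fst z)" using z by simp
      finally show "g (fst z) = (\<integral>\<^sup>+m. g (fst z) * indicator {m} (snd z) \<partial>count_space S)" by simp
    qed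
  qed
  also have "\<dots> = (\<integral>\<^sup>+m. (\<integral>\<^sup>+z. g (fst z) * indicator {m} (snd z) \<partial>\<omega>) \<partial>count_space S)"
    by (rule nn_integral_count_space_nn_integral[OF cS]) simp
  also have "\<dots> \<le> (\<integral>\<^sup>+m. ennreal (pmf p2 m) * g m \<partial>count_space S)"
  proof (rule nn_integral_mono)
    fix m :: "'v mstate"
    show "(\<integral>\<^sup>+z. g (fst z) * indicator {m} (snd z) \<partial>\<omega>) \<le> ennreal (pmf p2 m) * g m"
      unfolding g_def p2 by (rule Kineq[OF e cnt weighting_bound]) (rule W)
  qed
  also have "\<dots> = (\<integral>\<^sup>+m. g m \<partial>p2)"
    by (subst nn_integral_count_space_indicator)
       (auto simp: nn_integral_measure_pmf S_def set_pmf_iff intro!: nn_integral_cong split: split_indicator)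
  finally show ?thesis unfolding g_def by (rule pda_mono_nn[OF e])
qed

theorem proposition5:
  fixes P P' :: "'v mstate pmf set" and e e' :: "'v \<Rightarrow> real"
  assumes "countable (UNIV :: 'v set)" and "infinite (UNIV :: 'v set)"
    and "P \<in> Dom" and "P' \<in> Dom" and "e \<in> Err" and "e' \<in> Err"
  shows "(D_le P P' \<longrightarrow> da P e \<le> da P' e) \<and> (e \<le> e' \<longrightarrow> da P e \<le> da P e')"
proof (intro conjI impI)
  have ne: "P \<noteq> {}" using assms(3) by (simp add: Dom_def)
  have bdd: "bdd_above ((\<lambda>p. pda p f) ` Q)" if "f \<in> Err" for f Q
    by (rule bdd_aboveI2[where M=1]) (rule pda_bounds(2)[OF that])
  assume "D_le P P'"
  show "da P e \<le> da P' e"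
    unfolding da_def
  proof (rule cSUP_least[OF ne])
    fix p assume "p \<in> P"
    then obtain p' where p': "p' \<in> P'" "pmf_le p p'" using \<open>D_le P P'\<close> by (auto simp: D_le_def)
    have "pda p e \<le> pda p' e" by (rule pda_mono_pmf_le[OF assms(5,1) p'(2)])
    also have "\<dots> \<le> (SUP p\<in>P'. pda p e)" by (rule cSUP_upper[OF p'(1) bdd[OF assms(5)]])
    finally show "pda p e \<le> (SUP p\<in>P'. pda p e)" .
  qed
next
  have ne: "P \<noteq> {}" using assms(3) by (simp add: Dom_def)
  have bdd: "bdd_above ((\<lambda>p. pda p f) ` Q)" if "f \<in> Err" for f Q
    by (rule bdd_aboveI2[where M=1]) (rule pda_bounds(2)[OF that])
  assume "e \<le> e'"
  show "da P e \<le> da P e'"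
    unfolding da_def
  proof (rule cSUP_least[OF ne])
    fix p assume "p \<in> P"
    have "pda p e \<le> pda p e'" by (rule pda_mono_e[OF assms(5,6) \<open>e \<le> e'\<close>])
    also have "\<dots> \<le> (SUP p\<in>P. pda p e')" by (rule cSUP_upper[OF \<open>p \<in> P\<close> bdd[OF assms(6)]])
    finally show "pda p e \<le> (SUP p\<in>P. pda p e')" .
  qed
qed

end
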